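(* For any number of features $D$, $Z_1(\boldsymbol\lambda)>1$ for every feasible $\boldsymbol\lambda$ in the positive regions $P=\mathbb R^D_{++}\cup(-\mathbb R^D_{++})$, where $$Z_1(\boldsymbol\lambda)=\pi_1^*\prod_{i=1}^D(1+\pi_2^*\lambda_i)+\pi_2^*\prod_{i=1}^D(1-\pi_1^*\lambda_i).$$
   Context: Setting: a mixture of two Bernoullis on $\{0,1\}^D$. - The true distribution is $p^*(\mathbf x)=\pi_1^*B(\mathbf x\mid\boldsymbol\mu_1^* )+\pi_2^*B(\mathbf x\mid\boldsymbol\mu_2^* )$, where $B(\mathbf x\mid\boldsymbol\mu)=\prod_i\mu_i^{x_i}(1-\mu_i)^{1-x_i}$, $\pi_1^*\in(0,1)$ and $\pi_2^*=1-\pi_1^*$. - Let $\overline{\mathbf x}=\mathbb E_{p^*}[\mathbf x]$, $S_i=\overline x_i(1-\overline x_i)$ and $\boldsymbol\mu^*=(\boldsymbol\mu_1^*-\boldsymbol\mu_2^* )/2$. - For a model component mean $\boldsymbol\mu_1\in[0,1]^D$, set $\mathbf b=\boldsymbol\mu_1-\overline{\mathbf x}$ and $\lambda_i=2S_i^{-1}\mu_i^*b_i$. - The feasible domain of $\boldsymbol\lambda$ is the image of $[0,1]^D$ under this affine map. On it, $1+\pi_2^*\lambda_i\ge0$ and $1-\pi_1^*\lambda_i\ge0$. - $Z_1(\boldsymbol\lambda)$ is the leading-order (small $\pi_1$, $\boldsymbol\mu_2=\overline{\mathbf x}$) factor by which EM multiplies $\pi_1$. - $\mathbb R^D_{++}$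 denotes vectors with all coordinates strictly positive. *)

theory Defs
  imports "HOL-Analysis.Analysis"
begin

text \<open>Mean of the true mixture of two product Bernoullis:
  E[x] = pi1 * mu1* + pi2 * mu2*, with pi2 = 1 - pi1.\<close>
definition xbar :: "real \<Rightarrow> real^'n \<Rightarrow> real^'n \<Rightarrow> real^'n" where
  "xbar p1 m1 m2 = (\<chi> i. p1 * m1 $ i + (1 - p1) * m2 $ i)"

definition Svar :: "real \<Rightarrow> real^'n \<Rightarrow> real^'n \<Rightarrow> real^'n" where
  "Svar p1 m1 m2 = (\<chi> i. xbar p1 m1 m2 $ i * (1 - xbar p1 m1 m2 $ i))"

text \<open>lambda_i = 2 S_i^{-1} mu*_i b_i with mu* = (mu1* - mu2*)/2, b = mu1 - xbar.\<close>
definition lam :: "real \<Rightarrow> real^'n \<Rightarrow> real^'n \<Rightarrow> real^'n \<Rightarrow> real^'n" where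
  "lam p1 m1 m2 mu1 = (\<chi> i. 2 * inverse (Svar p1 m1 m2 $ i) * ((m1 $ i - m2 $ i) / 2)
                              * (mu1 $ i - xbar p1 m1 m2 $ i))"

definition Z1 :: "real \<Rightarrow> real^'n \<Rightarrow> real" where
  "Z1 p1 l = p1 * (\<Prod>i\<in>UNIV. 1 + (1 - p1) * l $ i) + (1 - p1) * (\<Prod>i\<in>UNIV. 1 - p1 * l $ i)"

end

theory Submission
  imports Defs
begin

lemma key_aux:
  fixes a :: real and x :: "'i \<Rightarrow> real"
  assumes "finite S" "0 < a" "a < 1" "\<forall>i\<in>S. 0 < x i \<and> a * x i \<le> 1"
  shows "1 \<le> (\<Prod>i\<in>S. 1 + (1-a) * x i) \<and> 0 \<le> (\<Prod>i\<in>S. 1 - a * x i)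
    \<and> (\<Prod>i\<in>S. 1 - a * x i) \<le> 1 \<and> (S \<noteq> {} \<longrightarrow> 1 < (\<Prod>i\<in>S. 1 + (1-a) * x i))
    \<and> 1 \<le> a * (\<Prod>i\<in>S. 1 + (1-a) * x i) + (1-a) * (\<Prod>i\<in>S. 1 - a * x i)
    \<and> (2 \<le> card S \<longrightarrow> 1 < a * (\<Prod>i\<in>S. 1 + (1-a) * x i) + (1-a) * (\<Prod>i\<in>S. 1 - a * x i))"
  using assms
proof (induction S rule: finite_induct)
  case empty
  then show ?case by simp
next
  case (insert j S)
  define A where "A = (\<Prod>i\<in>S. 1 + (1-a) * x i)"
  define B where "B = (\<Prod>i\<in>S. 1 - a * x i)"
  have IH: "1 \<le> A" "0 \<le> B" "B \<le> 1" "S \<noteq> {} \<longrightarrow> 1 < A" "1 \<le> a * A + (1-a) * B"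
    "2 \<le> card S \<longrightarrow> 1 < a * A + (1-a) * B"
    using insert unfolding A_def B_def by auto
  have xj: "0 < x j" "a * x j \<le> 1" using insert by auto
  have eA: "(\<Prod>i\<in>insert j S. 1 + (1-a) * x i) = (1 + (1-a) * x j) * A"
    using insert A_def by simp
  have eB: "(\<Prod>i\<in>insert j S. 1 - a * x i) = (1 - a * x j) * B"
    using insert B_def by simp
  have f1: "1 < 1 + (1-a) * x j" using xj insert by simp
  have f2: "0 \<le> 1 - a * x j" "1 - a * x j \<le> 1" using xj insert by auto
  have g0: "(1 + (1-a) * x j) \<le> (1 + (1-a) * x j) * A"
    using mult_left_mono[of 1 A "1 + (1-a) * x j"] f1 IH(1) by simp
  have g1s: "1 < (1 + (1-a) * x j) * A" using g0 f1 by linarith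
  have g1: "1 \<le> (1 + (1-a) * x j) * A" using g1s by simp
  have g2: "0 \<le> (1 - a * x j) * B" using f2 IH(2) by simp
  have g3: "(1 - a * x j) * B \<le> 1" using f2 IH(2,3) by (simp add: mult_le_one)
  have Zeq: "a * ((1 + (1-a) * x j) * A) + (1-a) * ((1 - a * x j) * B)
      = (a * A + (1-a) * B) + a * (1-a) * x j * (A - B)"
    by (simp add: algebra_simps)
  have AB: "0 \<le> A - B" using IH by linarith
  have pos: "0 \<le> a * (1-a) * x j * (A - B)" using AB xj insert by simp
  have Z1: "1 \<le> a * ((1 + (1-a) * x j) * A) + (1-a) * ((1 - a * x j) * B)"
    using Zeq pos IH(5) by linarith
  have Z2: "1 < a * ((1 + (1-a) * x j) * A) + (1-a) * ((1 - a * x j) * B)"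
    if "2 \<le> card (insert j S)"
  proof -
    have "S \<noteq> {}" using that insert by auto
    then have "1 < A" using IH by simp
    then have "0 < A - B" using IH by linarith
    then have "0 < a * (1-a) * x j * (A - B)" using xj insert by simp
    then show ?thesis using Zeq IH(5) by linarith
  qed
  show ?case unfolding eA eB using g1 g1s g2 g3 Z1 Z2 by simp
qed

lemma key:
  fixes a :: real and x :: "'i \<Rightarrow> real"
  assumes "finite S" "0 < a" "a < 1" "\<forall>i\<in>S. 0 < x i \<and> a * x i \<le> 1" "2 \<le> card S"
  shows "1 < a * (\<Prod>i\<in>S. 1 + (1-a) * x i) + (1-a) * (\<Prod>i\<in>S. 1 - a * x i)"
  using key_aux[OF assms(1-4)] assms(5) by blast

lemma h2: "2 * inverse (D::real) * (d / 2) * M = d * M / D"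
proof -
  have "2 * inverse D * (d / 2) * M = (2 * (d / 2)) * M * inverse D" by (simp only: mult_ac)
  also have "2 * (d / 2) = d" by simp
  also have "d * M * inverse D = d * M / D" by (simp only: divide_inverse)
  finally show ?thesis .
qed

lemma feas:
  fixes a m1 m2 mu :: real
  assumes "0 < a" "a < 1" "0 \<le> m1" "m1 \<le> 1" "0 \<le> m2" "m2 \<le> 1" "0 \<le> mu" "mu \<le> 1"
    and xb: "xb = a * m1 + (1 - a) * m2"
    and S: "0 < xb * (1 - xb)"
    and l: "l = 2 * inverse (xb * (1 - xb)) * ((m1 - m2) / 2) * (mu - xb)"
  shows "0 \<le> 1 - a * l" "0 \<le> 1 + (1 - a) * l"
proof -
  have le: "l = (m1 - m2) * (mu - xb) / (xb * (1 - xb))" unfolding l by (rule h2)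
  have xb0: "0 \<le> xb" "xb \<le> 1"
  proof -
    show "0 \<le> xb" unfolding xb using assms(1-6) by simp
    have "xb \<le> a * 1 + (1-a) * 1" unfolding xb
      by (intro add_mono mult_left_mono) (use assms(1-6) in auto)
    then show "xb \<le> 1" by simp
  qed
  have E: "xb * (1 - xb) - a * ((m1 - m2) * (mu - xb)) = mu * (1 - xb) * m2 + (1 - mu) * xb * (1 - m2)"
    unfolding xb by (simp add: algebra_simps)
  have F: "xb * (1 - xb) + (1-a) * ((m1 - m2) * (mu - xb)) = mu * (1 - xb) * m1 + (1 - mu) * xb * (1 - m1)"
    unfolding xb by (simp add: algebra_simps)
  have E0: "0 \<le> mu * (1 - xb) * m2 + (1 - mu) * xb * (1 - m2)"
    using assms(1-8) xb0 by (intro add_nonneg_nonneg mult_nonneg_nonneg) auto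
  have F0: "0 \<le> mu * (1 - xb) * m1 + (1 - mu) * xb * (1 - m1)"
    using assms(1-8) xb0 by (intro add_nonneg_nonneg mult_nonneg_nonneg) auto
  have D: "0 < xb * (1 - xb)" by (rule S)
  have al: "a * l = (a * ((m1 - m2) * (mu - xb))) / (xb * (1 - xb))" unfolding le by (rule times_divide_eq_right)
  have "(a * ((m1 - m2) * (mu - xb))) / (xb * (1 - xb)) \<le> 1"
    apply (subst pos_divide_le_eq[OF D])
    apply (simp only: mult_1_left)
    using E E0 by linarith
  then show "0 \<le> 1 - a * l" using al by linarith
  have bl: "(1 - a) * l = ((1 - a) * ((m1 - m2) * (mu - xb))) / (xb * (1 - xb))" unfolding le by (rule times_divide_eq_right)
  have "- 1 \<le> ((1 - a) * ((m1 - m2) * (mu - xb))) / (xb * (1 - xb))"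
    apply (subst pos_le_divide_eq[OF D])
    apply (simp only: mult_minus_left mult_1_left)
    using F F0 by linarith
  then show "0 \<le> 1 + (1 - a) * l" using bl by linarith
qed

theorem mainTheorem5:
  fixes p1 :: real and m1 m2 mu1 :: "real^'n"
  assumes "CARD('n) \<ge> 2"
    and "0 < p1" "p1 < 1"
    and "\<forall>i. 0 \<le> m1 $ i \<and> m1 $ i \<le> 1"
    and "\<forall>i. 0 \<le> m2 $ i \<and> m2 $ i \<le> 1"
    and "\<forall>i. 0 \<le> mu1 $ i \<and> mu1 $ i \<le> 1"
    and "(\<forall>i. lam p1 m1 m2 mu1 $ i > 0) \<or> (\<forall>i. lam p1 m1 m2 mu1 $ i < 0)"
  shows "Z1 p1 (lam p1 m1 m2 mu1) > 1"
proof -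
  define l where "l = lam p1 m1 m2 mu1"
  have lnz: "l $ i \<noteq> 0" for i
  proof -
    from assms(7) have "lam p1 m1 m2 mu1 $ i > 0 \<or> lam p1 m1 m2 mu1 $ i < 0" by blast
    then show ?thesis unfolding l_def by linarith
  qed
  have fe: "0 \<le> 1 - p1 * l $ i \<and> 0 \<le> 1 + (1 - p1) * l $ i" for i
  proof -
    have r1: "0 \<le> m1 $ i" "m1 $ i \<le> 1" using assms(4) by blast+
    have r2: "0 \<le> m2 $ i" "m2 $ i \<le> 1" using assms(5) by blast+
    have r3: "0 \<le> mu1 $ i" "mu1 $ i \<le> 1" using assms(6) by blast+
    define xb where "xb = p1 * m1 $ i + (1 - p1) * m2 $ i"
    have li: "l $ i = 2 * inverse (xb * (1 - xb)) * ((m1 $ i - m2 $ i) / 2) * (mu1 $ i - xb)"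
      unfolding l_def lam_def Svar_def xbar_def xb_def by simp
    have Snz: "xb * (1 - xb) \<noteq> 0"
    proof
      assume z: "xb * (1 - xb) = 0"
      have "l $ i = 2 * inverse 0 * ((m1 $ i - m2 $ i) / 2) * (mu1 $ i - xb)"
        using li unfolding z .
      then have "l $ i = 0" by simp
      then show False using lnz[of i] by simp
    qed
    have x0: "0 \<le> xb" unfolding xb_def using r1 r2 assms(2,3) by simp
    have "xb \<le> p1 * 1 + (1-p1) * 1" unfolding xb_def
      using r1 r2 assms(2,3) by (intro add_mono mult_left_mono) auto
    then have x1: "xb \<le> 1" by simp
    have "0 \<le> xb * (1 - xb)" using x0 x1 by simp
    then have S: "0 < xb * (1 - xb)" using Snz by linarith
    have q1: "0 \<le> 1 - p1 * l $ i" by (rule feas(1)[OF assms(2,3) r1 r2 r3 xb_def S li])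
    have q2: "0 \<le> 1 + (1 - p1) * l $ i" by (rule feas(2)[OF assms(2,3) r1 r2 r3 xb_def S li])
    show ?thesis using q1 q2 by blast
  qed
  have fin: "finite (UNIV :: 'n set)" "2 \<le> card (UNIV :: 'n set)" using assms(1) by auto
  from assms(7) show ?thesis
  proof
    assume pos: "\<forall>i. lam p1 m1 m2 mu1 $ i > 0"
    have kc: "\<forall>i\<in>UNIV. 0 < l $ i \<and> p1 * l $ i \<le> 1"
    proof
      fix i :: 'n
      have "0 < l $ i" using pos unfolding l_def by blast
      moreover have "p1 * l $ i \<le> 1" using fe[of i] by linarith
      ultimately show "0 < l $ i \<and> p1 * l $ i \<le> 1" by blast
    qed
    have "1 < p1 * (\<Prod>i\<in>UNIV. 1 + (1-p1) * l $ i) + (1-p1) * (\<Prod>i\<in>UNIV. 1 - p1 * l $ i)"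
      by (rule key[OF fin(1) assms(2,3) kc fin(2)])
    then show ?thesis unfolding Z1_def l_def .
  next
    assume neg: "\<forall>i. lam p1 m1 m2 mu1 $ i < 0"
    define y where "y = (\<lambda>i. - l $ i)"
    have yc: "\<forall>i\<in>UNIV. 0 < y i \<and> (1 - p1) * y i \<le> 1"
    proof
      fix i :: 'n
      have "0 < y i" using neg unfolding l_def y_def by simp
      moreover have "(1 - p1) * y i \<le> 1" using fe[of i] unfolding y_def by simp
      ultimately show "0 < y i \<and> (1 - p1) * y i \<le> 1" by simp
    qed
    have a1: "0 < 1 - p1" "1 - p1 < 1" using assms(2,3) by simp_all
    have K: "1 < (1-p1) * (\<Prod>i\<in>UNIV. 1 + (1-(1-p1)) * y i) + (1-(1-p1)) * (\<Prod>i\<in>UNIV. 1 - (1-p1) * y i)"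
      by (rule key[OF fin(1) a1 yc fin(2)])
    have e1: "(\<Prod>i\<in>UNIV. 1 + (1-(1-p1)) * y i) = (\<Prod>i\<in>UNIV. 1 - p1 * l $ i)"
      unfolding y_def by simp
    have e2: "(\<Prod>i\<in>UNIV. 1 - (1-p1) * y i) = (\<Prod>i\<in>UNIV. 1 + (1 - p1) * l $ i)"
      unfolding y_def by simp
    have "Z1 p1 l = (1-p1) * (\<Prod>i\<in>UNIV. 1 - p1 * l $ i) + p1 * (\<Prod>i\<in>UNIV. 1 + (1 - p1) * l $ i)"
      unfolding Z1_def by simp
    then show ?thesis using K unfolding e1 e2 l_def by simp
  qed
qed

end
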